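(* Let $\Delta$ be an irreducible reduced root system with positive roots $\Delta^+$ and simple roots $\Pi$, partially ordered by $\mu\preccurlyeq\nu$ iff $\nu-\mu$ is a non-negative integral linear combination of simple roots. 1) For any $\gamma\in\Delta^+$, the subposet $\{\nu\in\Delta^+\mid \nu\succcurlyeq\gamma\}$ is a modular lattice. 2) For $\gamma_1,\gamma_2\in\Delta^+$, the greatest lower bound $\gamma_1\wedge\gamma_2$ exists in $(\Delta^+,\preccurlyeq)$ if and only if $\mathrm{supp}(\gamma_1)\cap\mathrm{supp}(\gamma_2)\neq\varnothing$. In this case, writing $\gamma_i=\sum_{\alpha\in\Pi}c_{i\alpha}\alpha$, one has $\gamma_1\wedge\gamma_2=\sum_{\alpha\in\Pi}\min\{c_{1\alpha},c_{2\alpha}\}\alpha$.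
   Context: For $\mu=\sum_{\alpha\in\Pi}c_\alpha\alpha$, $\mathrm{supp}(\mu)=\{\alpha\in\Pi\mid c_\alpha\neq 0\}$. The greatest lower bound (meet) of $\gamma_1,\gamma_2$ is a positive root $\nu$ with $\nu\preccurlyeq\gamma_1,\gamma_2$ such that every positive root $\kappa$ with $\kappa\preccurlyeq\gamma_1,\gamma_2$ satisfies $\kappa\preccurlyeq\nu$. *)

theory Defs
  imports "HOL-Analysis.Analysis"
begin

definition cartan_int :: "'a::euclidean_space \<Rightarrow> 'a \<Rightarrow> real" where
  "cartan_int \<beta> \<alpha> = 2 * (\<beta> \<bullet> \<alpha>) / (\<alpha> \<bullet> \<alpha>)"

definition root_system :: "'a::euclidean_space set \<Rightarrow> bool" where
  "root_system R \<longleftrightarrow> finite R \<and> 0 \<notin> R \<and> span R = UNIV \<and>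
     (\<forall>\<alpha>\<in>R. \<forall>\<beta>\<in>R. \<beta> - cartan_int \<beta> \<alpha> *\<^sub>R \<alpha> \<in> R \<and> cartan_int \<beta> \<alpha> \<in> \<int>)"

definition reduced_root_system :: "'a::euclidean_space set \<Rightarrow> bool" where
  "reduced_root_system R \<longleftrightarrow> (\<forall>\<alpha>\<in>R. \<forall>c::real. c *\<^sub>R \<alpha> \<in> R \<longrightarrow> c = 1 \<or> c = -1)"

definition irreducible_root_system :: "'a::euclidean_space set \<Rightarrow> bool" where
  "irreducible_root_system R \<longleftrightarrow> R \<noteq> {} \<and>
     \<not> (\<exists>A B. A \<union> B = R \<and> A \<inter> B = {} \<and> A \<noteq> {} \<and> B \<noteq> {} \<and>
            (\<forall>a\<in>A. \<forall>b\<in>B. a \<bullet> b = 0))"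

definition is_base :: "'a::euclidean_space set \<Rightarrow> 'a set \<Rightarrow> bool" where
  "is_base R P \<longleftrightarrow> P \<subseteq> R \<and> independent P \<and>
     (\<forall>\<beta>\<in>R. \<exists>c::'a \<Rightarrow> int. \<beta> = (\<Sum>\<alpha>\<in>P. of_int (c \<alpha>) *\<^sub>R \<alpha>) \<and>
                 ((\<forall>\<alpha>\<in>P. c \<alpha> \<ge> 0) \<or> (\<forall>\<alpha>\<in>P. c \<alpha> \<le> 0)))"

definition nat_comb :: "'a::euclidean_space set \<Rightarrow> 'a \<Rightarrow> bool" where
  "nat_comb P v \<longleftrightarrow> (\<exists>c::'a \<Rightarrow> nat. v = (\<Sum>\<alpha>\<in>P. of_nat (c \<alpha>) *\<^sub>R \<alpha>))"

definition pos_roots :: "'a::euclidean_space set \<Rightarrow> 'a set \<Rightarrow> 'a set" where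
  "pos_roots R P = {\<beta>\<in>R. nat_comb P \<beta>}"

definition root_le :: "'a::euclidean_space set \<Rightarrow> 'a \<Rightarrow> 'a \<Rightarrow> bool" where
  "root_le P \<mu> \<nu> \<longleftrightarrow> nat_comb P (\<nu> - \<mu>)"

definition root_coeff :: "'a::euclidean_space set \<Rightarrow> 'a \<Rightarrow> 'a \<Rightarrow> real" where
  "root_coeff P \<mu> \<alpha> = representation P \<mu> \<alpha>"

definition root_supp :: "'a::euclidean_space set \<Rightarrow> 'a \<Rightarrow> 'a set" where
  "root_supp P \<mu> = {\<alpha>\<in>P. root_coeff P \<mu> \<alpha> \<noteq> 0}"

definition is_meet_in :: "('b \<Rightarrow> 'b \<Rightarrow> bool) \<Rightarrow> 'b set \<Rightarrow> 'b \<Rightarrow> 'b \<Rightarrow> 'b \<Rightarrow> bool" where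
  "is_meet_in le S x y z \<longleftrightarrow> z \<in> S \<and> le z x \<and> le z y \<and>
     (\<forall>w\<in>S. le w x \<and> le w y \<longrightarrow> le w z)"

definition is_join_in :: "('b \<Rightarrow> 'b \<Rightarrow> bool) \<Rightarrow> 'b set \<Rightarrow> 'b \<Rightarrow> 'b \<Rightarrow> 'b \<Rightarrow> bool" where
  "is_join_in le S x y z \<longleftrightarrow> z \<in> S \<and> le x z \<and> le y z \<and>
     (\<forall>w\<in>S. le x w \<and> le y w \<longrightarrow> le z w)"

definition is_lattice_on :: "('b \<Rightarrow> 'b \<Rightarrow> bool) \<Rightarrow> 'b set \<Rightarrow> bool" where
  "is_lattice_on le S \<longleftrightarrow> (\<forall>x\<in>S. \<forall>y\<in>S. (\<exists>z. is_meet_in le S x y z) \<and> (\<exists>z. is_join_in le S x y z))"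

definition is_modular_lattice_on :: "('b \<Rightarrow> 'b \<Rightarrow> bool) \<Rightarrow> 'b set \<Rightarrow> bool" where
  "is_modular_lattice_on le S \<longleftrightarrow> is_lattice_on le S \<and>
     (\<forall>a\<in>S. \<forall>b\<in>S. \<forall>c\<in>S. le a c \<longrightarrow>
        (\<forall>m l j r. is_meet_in le S b c m \<and> is_join_in le S a m l \<and>
                   is_join_in le S a b j \<and> is_meet_in le S j c r \<longrightarrow> l = r))"

end

theory Submission
  imports Defs
begin

definition lc :: "'a::euclidean_space set \<Rightarrow> ('a \<Rightarrow> real) \<Rightarrow> 'a" where
  "lc P f = (\<Sum>\<alpha>\<in>P. f \<alpha> *\<^sub>R \<alpha>)"

abbreviation lcn :: "'a::euclidean_space set \<Rightarrow> ('a \<Rightarrow> nat) \<Rightarrow> 'a" where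
  "lcn P k \<equiv> lc P (\<lambda>\<alpha>. real (k \<alpha>))"

lemma meet_unique:
  assumes "is_meet_in le S x y z1" "is_meet_in le S x y z2"
    "\<forall>u\<in>S. \<forall>v\<in>S. le u v \<longrightarrow> le v u \<longrightarrow> u = v"
  shows "z1 = z2"
  using assms unfolding is_meet_in_def by blast

lemma join_unique:
  assumes "is_join_in le S x y z1" "is_join_in le S x y z2"
    "\<forall>u\<in>S. \<forall>v\<in>S. le u v \<longrightarrow> le v u \<longrightarrow> u = v"
  shows "z1 = z2"
  using assms unfolding is_join_in_def by blast


locale rsys =
  fixes R P :: "'a::euclidean_space set"
  assumes rs: "root_system R" and red: "reduced_root_system R" and base: "is_base R P"
begin

lemma finR: "finite R" using rs unfolding root_system_def by auto
lemma zeroR: "0 \<notin> R" using rs unfolding root_system_def by auto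
lemma PR: "P \<subseteq> R" using base unfolding is_base_def by auto
lemma finP: "finite P" using PR finR finite_subset by auto
lemma indep: "independent P" using base unfolding is_base_def by auto

lemma lc_add: "lc P f + lc P g = lc P (\<lambda>\<alpha>. f \<alpha> + g \<alpha>)"
  unfolding lc_def by (simp add: sum.distrib scaleR_add_left)
lemma lc_diff: "lc P f - lc P g = lc P (\<lambda>\<alpha>. f \<alpha> - g \<alpha>)"
  unfolding lc_def by (simp add: sum_subtractf scaleR_diff_left)
lemma lc_uminus: "- lc P f = lc P (\<lambda>\<alpha>. - f \<alpha>)"
  unfolding lc_def by (simp add: sum_negf)
lemma lc_cong: "(\<And>\<alpha>. \<alpha> \<in> P \<Longrightarrow> f \<alpha> = g \<alpha>) \<Longrightarrow> lc P f = lc P g"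
  unfolding lc_def by (rule sum.cong) auto
lemma lc_zero: "lc P (\<lambda>_. 0) = 0" unfolding lc_def by simp
lemma lc_single: assumes "\<alpha> \<in> P" shows "lc P (\<lambda>\<beta>. if \<beta> = \<alpha> then 1 else 0) = \<alpha>"
proof -
  have "lc P (\<lambda>\<beta>. if \<beta> = \<alpha> then 1 else 0) = (\<Sum>\<beta>\<in>P. if \<beta> = \<alpha> then \<beta> else 0)"
    unfolding lc_def by (rule sum.cong) auto
  then show ?thesis using finP assms by simp
qed

lemma repr_lc: assumes "\<alpha> \<in> P" shows "representation P (lc P f) \<alpha> = f \<alpha>"
proof -
  let ?g = "\<lambda>\<beta>. if \<beta> \<in> P then f \<beta> else 0"
  have "representation P (lc P f) = ?g"
  proof (rule representation_eqI[OF indep])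
    show "lc P f \<in> span P" unfolding lc_def
      by (intro span_sum span_scale span_base)
    show "\<And>b. ?g b \<noteq> 0 \<Longrightarrow> b \<in> P" by (auto split: if_splits)
    show "finite {b. ?g b \<noteq> 0}" using finP by (rule finite_subset[rotated]) (auto split: if_splits)
    have "(\<Sum>b | ?g b \<noteq> 0. ?g b *\<^sub>R b) = (\<Sum>b\<in>P. ?g b *\<^sub>R b)"
      using finP by (intro sum.mono_neutral_cong_left) (auto split: if_splits)
    also have "\<dots> = lc P f" unfolding lc_def by (rule sum.cong) auto
    finally show "(\<Sum>b | ?g b \<noteq> 0. ?g b *\<^sub>R b) = lc P f" .
  qed
  then show ?thesis using assms by simp
qed

lemma lc_inj: "lc P f = lc P g \<Longrightarrow> \<alpha> \<in> P \<Longrightarrow> f \<alpha> = g \<alpha>"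
  by (metis repr_lc)

lemma lc_inner: "lc P f \<bullet> x = (\<Sum>\<alpha>\<in>P. f \<alpha> * (\<alpha> \<bullet> x))"
  unfolding lc_def by (simp add: inner_sum_left)

lemma lc_inner2: "lc P f \<bullet> lc P g = (\<Sum>\<alpha>\<in>P. \<Sum>\<beta>\<in>P. f \<alpha> * g \<beta> * (\<alpha> \<bullet> \<beta>))"
  unfolding lc_inner by (simp add: lc_def inner_sum_right sum_distrib_left mult.assoc)

lemma neg_root: "x \<in> R \<Longrightarrow> - x \<in> R"
proof -
  assume x: "x \<in> R"
  then have "x \<noteq> 0" using zeroR by auto
  then have "cartan_int x x = 2" unfolding cartan_int_def by simp
  moreover have "x - cartan_int x x *\<^sub>R x \<in> R" using rs x unfolding root_system_def by blast
  moreover have "x - 2 *\<^sub>R x = - x" by (simp add: scaleR_2)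
  ultimately show ?thesis by simp
qed

lemma int_prod_lt4:
  fixes a b :: real
  assumes "a \<in> \<int>" "b \<in> \<int>" "a > 0" "b > 0" "a * b < 4"
  shows "a = 1 \<or> b = 1"
proof -
  obtain i j where ij: "a = of_int i" "b = of_int j" using assms(1,2) by (auto elim!: Ints_cases)
  have "i > 0" "j > 0" "i * j < 4" using assms ij by (auto simp flip: of_int_mult)
  then have "i = 1 \<or> j = 1"
  proof -
    have "\<not> (i \<ge> 2 \<and> j \<ge> 2)"
    proof
      assume "i \<ge> 2 \<and> j \<ge> 2"
      then have "i * j \<ge> 2 * 2" by (intro mult_mono) auto
      with \<open>i * j < 4\<close> show False by simp
    qed
    then show ?thesis using \<open>i > 0\<close> \<open>j > 0\<close> by presburger
  qed
  then show ?thesis using ij by auto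
qed

lemma F1:
  assumes a: "\<alpha> \<in> R" and b: "\<beta> \<in> R" and pos: "\<beta> \<bullet> \<alpha> > 0" and ne: "\<beta> \<noteq> \<alpha>"
  shows "\<beta> - \<alpha> \<in> R"
proof -
  have a0: "\<alpha> \<bullet> \<alpha> > 0" using a zeroR by (metis inner_gt_zero_iff)
  have b0: "\<beta> \<bullet> \<beta> > 0" using b zeroR by (metis inner_gt_zero_iff)
  define t where "t = (\<beta> \<bullet> \<alpha>) / (\<alpha> \<bullet> \<alpha>)"
  define v where "v = \<beta> - t *\<^sub>R \<alpha>"
  have vv: "v \<bullet> v = \<beta> \<bullet> \<beta> - (\<beta> \<bullet> \<alpha>)^2 / (\<alpha> \<bullet> \<alpha>)"
    using a0 unfolding v_def t_def
    by (simp add: inner_diff_left inner_diff_right inner_commute power2_eq_square field_simps)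
  have "v \<noteq> 0"
  proof
    assume "v = 0"
    then have "t *\<^sub>R \<alpha> \<in> R" using b unfolding v_def by simp
    then have "t = 1 \<or> t = -1" using red a unfolding reduced_root_system_def by blast
    moreover have "t > 0" unfolding t_def using pos a0 by simp
    ultimately have "t = 1" by auto
    then show False using \<open>v = 0\<close> ne unfolding v_def by simp
  qed
  then have "v \<bullet> v > 0" by simp
  then have lt: "(\<beta> \<bullet> \<alpha>)^2 < (\<alpha> \<bullet> \<alpha>) * (\<beta> \<bullet> \<beta>)"
    using a0 vv by (simp add: field_simps)
  have "cartan_int \<beta> \<alpha> * cartan_int \<alpha> \<beta> = 4 * (\<beta> \<bullet> \<alpha>)^2 / ((\<alpha> \<bullet> \<alpha>) * (\<beta> \<bullet> \<beta>))"
    unfolding cartan_int_def by (simp add: inner_commute power2_eq_square field_simps)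
  also have "\<dots> < 4" using lt a0 b0 by (simp add: field_simps)
  finally have prod: "cartan_int \<beta> \<alpha> * cartan_int \<alpha> \<beta> < 4" .
  have i1: "cartan_int \<beta> \<alpha> \<in> \<int>" "\<beta> - cartan_int \<beta> \<alpha> *\<^sub>R \<alpha> \<in> R"
    using rs a b unfolding root_system_def by blast+
  have i2: "cartan_int \<alpha> \<beta> \<in> \<int>" "\<alpha> - cartan_int \<alpha> \<beta> *\<^sub>R \<beta> \<in> R"
    using rs a b unfolding root_system_def by blast+
  have "cartan_int \<beta> \<alpha> > 0" "cartan_int \<alpha> \<beta> > 0"
    unfolding cartan_int_def using pos a0 b0 by (simp_all add: inner_commute)
  then have "cartan_int \<beta> \<alpha> = 1 \<or> cartan_int \<alpha> \<beta> = 1"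
    using int_prod_lt4 i1(1) i2(1) prod by blast
  then show ?thesis
  proof
    assume "cartan_int \<beta> \<alpha> = 1" then show ?thesis using i1(2) by simp
  next
    assume "cartan_int \<alpha> \<beta> = 1"
    then have "\<alpha> - \<beta> \<in> R" using i2(2) by simp
    then show ?thesis using neg_root by fastforce
  qed
qed

lemma F1': "\<alpha> \<in> R \<Longrightarrow> \<beta> \<in> R \<Longrightarrow> \<beta> \<bullet> \<alpha> < 0 \<Longrightarrow> \<beta> \<noteq> - \<alpha> \<Longrightarrow> \<beta> + \<alpha> \<in> R"
  using F1[of "- \<alpha>" \<beta>] neg_root by auto

lemma no_mixed:
  assumes "lc P f \<in> R" "\<alpha> \<in> P" "\<beta> \<in> P" "f \<alpha> > 0" "f \<beta> < 0"
  shows False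
proof -
  obtain c :: "'a \<Rightarrow> int" where c: "lc P f = (\<Sum>\<alpha>\<in>P. of_int (c \<alpha>) *\<^sub>R \<alpha>)"
    and s: "(\<forall>\<alpha>\<in>P. c \<alpha> \<ge> 0) \<or> (\<forall>\<alpha>\<in>P. c \<alpha> \<le> 0)"
    using base assms(1) unfolding is_base_def by blast
  have "lc P f = lc P (\<lambda>\<alpha>. of_int (c \<alpha>))" using c unfolding lc_def .
  then have "f \<alpha> = of_int (c \<alpha>)" "f \<beta> = of_int (c \<beta>)" using lc_inj assms by blast+
  then show False using s assms by force
qed

lemma simple_obtuse:
  assumes "\<alpha> \<in> P" "\<beta> \<in> P" "\<alpha> \<noteq> \<beta>" shows "\<alpha> \<bullet> \<beta> \<le> 0"
proof (rule ccontr)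
  assume "\<not> ?thesis"
  then have "\<alpha> - \<beta> \<in> R" using F1[of \<beta> \<alpha>] assms PR by auto
  moreover have "\<alpha> - \<beta> = lc P (\<lambda>\<gamma>. (if \<gamma> = \<alpha> then 1 else 0) - (if \<gamma> = \<beta> then 1 else 0))"
    using lc_single[OF assms(1)] lc_single[OF assms(2)] lc_diff by metis
  ultimately show False using no_mixed[OF _ assms(1,2)] assms(3) by fastforce
qed

lemma pos_iff: "x \<in> pos_roots R P \<longleftrightarrow> x \<in> R \<and> (\<exists>k. x = lcn P k)"
  unfolding pos_roots_def nat_comb_def lc_def by simp

lemma le_iff: "root_le P (lcn P a) (lcn P b) \<longleftrightarrow> (\<forall>\<alpha>\<in>P. a \<alpha> \<le> b \<alpha>)"
proof
  assume "root_le P (lcn P a) (lcn P b)"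
  then obtain c :: "'a \<Rightarrow> nat" where c: "lcn P b - lcn P a = lcn P c"
    unfolding root_le_def nat_comb_def lc_def by auto
  then have "lcn P b = lc P (\<lambda>\<alpha>. real (a \<alpha>) + real (c \<alpha>))"
    by (metis lc_add diff_eq_eq add.commute)
  then have "\<forall>\<alpha>\<in>P. real (b \<alpha>) = real (a \<alpha>) + real (c \<alpha>)" using lc_inj by blast
  then show "\<forall>\<alpha>\<in>P. a \<alpha> \<le> b \<alpha>" by (metis of_nat_add of_nat_eq_iff le_add1)
next
  assume H: "\<forall>\<alpha>\<in>P. a \<alpha> \<le> b \<alpha>"
  have "lcn P b - lcn P a = lcn P (\<lambda>\<alpha>. b \<alpha> - a \<alpha>)"
    unfolding lc_diff using H by (intro lc_cong) (simp add: of_nat_diff)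
  then show "root_le P (lcn P a) (lcn P b)"
    unfolding root_le_def nat_comb_def lc_def by auto
qed

lemma le_antisym: assumes "root_le P x y" "root_le P y x" shows "x = y"
proof -
  obtain c :: "'a \<Rightarrow> nat" where c: "y - x = lcn P c"
    using assms(1) unfolding root_le_def nat_comb_def lc_def by auto
  obtain d :: "'a \<Rightarrow> nat" where d: "x - y = lcn P d"
    using assms(2) unfolding root_le_def nat_comb_def lc_def by auto
  have "lc P (\<lambda>\<alpha>. real (c \<alpha>) + real (d \<alpha>)) = lc P (\<lambda>_. 0)"
    unfolding lc_zero lc_add[symmetric] c[symmetric] d[symmetric] by simp
  then have "\<forall>\<alpha>\<in>P. real (c \<alpha>) + real (d \<alpha>) = 0" using lc_inj by blast
  then have "\<forall>\<alpha>\<in>P. real (c \<alpha>) = 0" by (metis add_nonneg_eq_0_iff of_nat_0_le_iff)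
  then have "lcn P c = lc P (\<lambda>_. 0)" by (intro lc_cong) auto
  then show ?thesis using c lc_zero by simp
qed

lemma lcn_nonzero: assumes "lcn P k \<in> R" shows "\<exists>\<alpha>\<in>P. k \<alpha> > 0"
proof (rule ccontr)
  assume "\<not> ?thesis"
  then have "lcn P k = lc P (\<lambda>_. 0)" by (intro lc_cong) auto
  then show False using assms zeroR lc_zero by simp
qed

lemma obtuse_incomp:
  assumes "lcn P k1 \<in> R" "lcn P k2 \<in> R" "\<alpha> \<in> P" "k2 \<alpha> < k1 \<alpha>" "\<beta> \<in> P" "k1 \<beta> < k2 \<beta>"
  shows "lcn P k1 \<bullet> lcn P k2 \<le> 0"
proof (rule ccontr)
  assume "\<not> ?thesis"
  moreover have "lcn P k1 \<noteq> lcn P k2" using lc_inj assms(3,4) by fastforce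
  ultimately have "lcn P k1 - lcn P k2 \<in> R" using F1 assms(1,2) by simp
  then have "lc P (\<lambda>\<gamma>. real (k1 \<gamma>) - real (k2 \<gamma>)) \<in> R" by (simp add: lc_diff)
  from no_mixed[of "\<lambda>\<gamma>. real (k1 \<gamma>) - real (k2 \<gamma>)", OF this assms(3,5)]
  show False using assms(4,6) by simp
qed

lemma dpdm:
  "lcn P (\<lambda>\<alpha>. k1 \<alpha> - min (k1 \<alpha>) (k2 \<alpha>)) \<bullet> lcn P (\<lambda>\<alpha>. k2 \<alpha> - min (k1 \<alpha>) (k2 \<alpha>)) \<le> 0"
  unfolding lc_inner2
proof (intro sum_nonpos)
  fix \<alpha> \<beta> assume ab: "\<alpha> \<in> P" "\<beta> \<in> P"
  show "real (k1 \<alpha> - min (k1 \<alpha>) (k2 \<alpha>)) * real (k2 \<beta> - min (k1 \<beta>) (k2 \<beta>)) * (\<alpha> \<bullet> \<beta>) \<le> 0"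
  proof (cases "\<alpha> = \<beta>")
    case True then show ?thesis by (cases "k1 \<beta> \<le> k2 \<beta>") auto
  next
    case False
    then have "\<alpha> \<bullet> \<beta> \<le> 0" using simple_obtuse ab by blast
    then show ?thesis by (intro mult_nonneg_nonpos) auto
  qed
qed

lemma nat_aux1: "real (max a b) - real (b - min a b) = real (a::nat)"
  by (cases "a \<le> b") (auto simp: of_nat_diff max_def min_def)
lemma nat_aux2: "real (min a b) + real (a - min a b) = real (a::nat)"
  by (cases "a \<le> b") (auto simp: of_nat_diff max_def min_def)

lemma down_step:
  assumes R1: "lcn P k1 \<in> R" and R2: "lcn P k2 \<in> R"
    and a0: "\<alpha>0 \<in> P" "k2 \<alpha>0 < k1 \<alpha>0" and b0: "\<beta>0 \<in> P" "k1 \<beta>0 < k2 \<beta>0"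
  shows "\<exists>\<alpha>\<in>P. (k2 \<alpha> < k1 \<alpha> \<and> lcn P k1 \<bullet> \<alpha> > 0) \<or> (k1 \<alpha> < k2 \<alpha> \<and> lcn P k2 \<bullet> \<alpha> > 0)"
proof (rule ccontr)
  assume H: "\<not> ?thesis"
  define dp where "dp = lcn P (\<lambda>\<alpha>. k1 \<alpha> - min (k1 \<alpha>) (k2 \<alpha>))"
  define dm where "dm = lcn P (\<lambda>\<alpha>. k2 \<alpha> - min (k1 \<alpha>) (k2 \<alpha>))"
  define M where "M = lcn P (\<lambda>\<alpha>. max (k1 \<alpha>) (k2 \<alpha>))"
  have g1: "lcn P k1 = M - dm" unfolding M_def dm_def lc_diff
    by (intro lc_cong) (simp add: nat_aux1)
  have g2: "lcn P k2 = M - dp" unfolding M_def dp_def lc_diff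
    by (intro lc_cong) (metis nat_aux1 max.commute min.commute)
  have i1: "dp \<bullet> lcn P k1 \<le> 0" unfolding dp_def lc_inner
  proof (intro sum_nonpos)
    fix \<alpha> assume "\<alpha> \<in> P"
    then show "real (k1 \<alpha> - min (k1 \<alpha>) (k2 \<alpha>)) * (\<alpha> \<bullet> lcn P k1) \<le> 0"
      using H by (cases "k2 \<alpha> < k1 \<alpha>") (auto simp: inner_commute intro!: mult_nonneg_nonpos)
  qed
  have i2: "dm \<bullet> lcn P k2 \<le> 0" unfolding dm_def lc_inner
  proof (intro sum_nonpos)
    fix \<alpha> assume "\<alpha> \<in> P"
    then show "real (k2 \<alpha> - min (k1 \<alpha>) (k2 \<alpha>)) * (\<alpha> \<bullet> lcn P k2) \<le> 0"
      using H by (cases "k1 \<alpha> < k2 \<alpha>") (auto simp: inner_commute intro!: mult_nonneg_nonpos)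
  qed
  have w: "dp \<bullet> dm \<le> 0" unfolding dp_def dm_def by (rule dpdm)
  have "M \<noteq> 0"
  proof
    assume "M = 0"
    then have "M = lc P (\<lambda>_. 0)" by (simp add: lc_zero)
    then have "real (max (k1 \<alpha>0) (k2 \<alpha>0)) = 0" using lc_inj a0(1) unfolding M_def by blast
    then show False using a0 by simp
  qed
  then have MM: "M \<bullet> M > 0" by simp
  have inc: "lcn P k1 \<bullet> lcn P k2 \<le> 0" by (rule obtuse_incomp[OF R1 R2 a0 b0])
  have e1: "dp \<bullet> lcn P k1 = M \<bullet> dp - dp \<bullet> dm" unfolding g1
    by (simp add: inner_diff_right inner_commute)
  have e2: "dm \<bullet> lcn P k2 = M \<bullet> dm - dp \<bullet> dm" unfolding g2
    by (simp add: inner_diff_right inner_commute)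
  have e3: "lcn P k1 \<bullet> lcn P k2 = M \<bullet> M - M \<bullet> dp - M \<bullet> dm + dp \<bullet> dm" unfolding g1 g2
    by (simp add: inner_diff_left inner_diff_right inner_commute)
  show False using i1 i2 w MM inc e1 e2 e3 by linarith
qed

lemma up_step:
  assumes R1: "lcn P k1 \<in> R" and R2: "lcn P k2 \<in> R"
    and a0: "\<alpha>0 \<in> P" "k2 \<alpha>0 < k1 \<alpha>0" and b0: "\<beta>0 \<in> P" "k1 \<beta>0 < k2 \<beta>0"
    and c0: "\<gamma>0 \<in> P" "0 < min (k1 \<gamma>0) (k2 \<gamma>0)"
  shows "\<exists>\<alpha>\<in>P. (k1 \<alpha> < k2 \<alpha> \<and> lcn P k1 \<bullet> \<alpha> < 0) \<or> (k2 \<alpha> < k1 \<alpha> \<and> lcn P k2 \<bullet> \<alpha> < 0)"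
proof (rule ccontr)
  assume H: "\<not> ?thesis"
  define dp where "dp = lcn P (\<lambda>\<alpha>. k1 \<alpha> - min (k1 \<alpha>) (k2 \<alpha>))"
  define dm where "dm = lcn P (\<lambda>\<alpha>. k2 \<alpha> - min (k1 \<alpha>) (k2 \<alpha>))"
  define m where "m = lcn P (\<lambda>\<alpha>. min (k1 \<alpha>) (k2 \<alpha>))"
  have g1: "lcn P k1 = m + dp" unfolding m_def dp_def lc_add
    by (intro lc_cong) (simp add: nat_aux2)
  have g2: "lcn P k2 = m + dm" unfolding m_def dm_def lc_add
    by (intro lc_cong) (metis nat_aux2 min.commute)
  have i1: "dm \<bullet> lcn P k1 \<ge> 0" unfolding dm_def lc_inner
  proof (intro sum_nonneg)
    fix \<alpha> assume "\<alpha> \<in> P"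
    then show "real (k2 \<alpha> - min (k1 \<alpha>) (k2 \<alpha>)) * (\<alpha> \<bullet> lcn P k1) \<ge> 0"
      using H by (cases "k1 \<alpha> < k2 \<alpha>") (auto simp: inner_commute intro!: mult_nonneg_nonneg)
  qed
  have i2: "dp \<bullet> lcn P k2 \<ge> 0" unfolding dp_def lc_inner
  proof (intro sum_nonneg)
    fix \<alpha> assume "\<alpha> \<in> P"
    then show "real (k1 \<alpha> - min (k1 \<alpha>) (k2 \<alpha>)) * (\<alpha> \<bullet> lcn P k2) \<ge> 0"
      using H by (cases "k2 \<alpha> < k1 \<alpha>") (auto simp: inner_commute intro!: mult_nonneg_nonneg)
  qed
  have w: "dp \<bullet> dm \<le> 0" unfolding dp_def dm_def by (rule dpdm)
  have "m \<noteq> 0"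
  proof
    assume "m = 0"
    then have "m = lc P (\<lambda>_. 0)" by (simp add: lc_zero)
    then have "real (min (k1 \<gamma>0) (k2 \<gamma>0)) = 0" using lc_inj c0(1) unfolding m_def by blast
    then show False using c0 by simp
  qed
  then have mm: "m \<bullet> m > 0" by simp
  have inc: "lcn P k1 \<bullet> lcn P k2 \<le> 0" by (rule obtuse_incomp[OF R1 R2 a0 b0])
  have e1: "dm \<bullet> lcn P k1 = m \<bullet> dm + dp \<bullet> dm" unfolding g1
    by (simp add: inner_add_right inner_commute)
  have e2: "dp \<bullet> lcn P k2 = m \<bullet> dp + dp \<bullet> dm" unfolding g2
    by (simp add: inner_add_right inner_commute)
  have e3: "lcn P k1 \<bullet> lcn P k2 = m \<bullet> m + m \<bullet> dp + m \<bullet> dm + dp \<bullet> dm" unfolding g1 g2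
    by (simp add: inner_add_left inner_add_right inner_commute)
  show False using i1 i2 w mm inc e1 e2 e3 by linarith
qed

lemma step_down:
  assumes R1: "lcn P k1 \<in> R" and a: "\<alpha> \<in> P" "k2 \<alpha> < k1 \<alpha>" "lcn P k1 \<bullet> \<alpha> > 0"
    and c0: "\<gamma>0 \<in> P" "0 < min (k1 \<gamma>0) (k2 \<gamma>0)"
  shows "lcn P (k1(\<alpha> := k1 \<alpha> - 1)) \<in> R"
    and "(\<lambda>\<beta>. min ((k1(\<alpha> := k1 \<alpha> - 1)) \<beta>) (k2 \<beta>)) = (\<lambda>\<beta>. min (k1 \<beta>) (k2 \<beta>))"
    and "(\<Sum>\<beta>\<in>P. ((k1(\<alpha> := k1 \<alpha> - 1)) \<beta> - k2 \<beta>) + (k2 \<beta> - (k1(\<alpha> := k1 \<alpha> - 1)) \<beta>))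
         < (\<Sum>\<beta>\<in>P. (k1 \<beta> - k2 \<beta>) + (k2 \<beta> - k1 \<beta>))"
proof -
  have sing: "lc P (\<lambda>\<beta>. if \<beta> = \<alpha> then 1 else 0) = \<alpha>" using lc_single a(1) by simp
  have "lcn P k1 \<noteq> \<alpha>"
  proof
    assume "lcn P k1 = \<alpha>"
    then have "lcn P k1 = lc P (\<lambda>\<beta>. if \<beta> = \<alpha> then 1 else 0)" unfolding sing .
    then have "\<forall>\<beta>\<in>P. real (k1 \<beta>) = (if \<beta> = \<alpha> then 1 else 0)" using lc_inj by blast
    then have "real (k1 \<gamma>0) = (if \<gamma>0 = \<alpha> then 1 else 0)" using c0(1) by blast
    then show False using c0(2) a(2) by (cases "\<gamma>0 = \<alpha>") auto
  qed
  then have "lcn P k1 - \<alpha> \<in> R" using F1[of \<alpha> "lcn P k1"] PR a R1 by auto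
  moreover have "lcn P k1 - lc P (\<lambda>\<beta>. if \<beta> = \<alpha> then 1 else 0) = lcn P (k1(\<alpha> := k1 \<alpha> - 1))"
    unfolding lc_diff using a(2) by (intro lc_cong) (auto simp: of_nat_diff)
  then have "lcn P k1 - \<alpha> = lcn P (k1(\<alpha> := k1 \<alpha> - 1))" unfolding sing .
  ultimately show "lcn P (k1(\<alpha> := k1 \<alpha> - 1)) \<in> R" by simp
  show "(\<lambda>\<beta>. min ((k1(\<alpha> := k1 \<alpha> - 1)) \<beta>) (k2 \<beta>)) = (\<lambda>\<beta>. min (k1 \<beta>) (k2 \<beta>))"
    using a(2) by (auto simp: fun_eq_iff min_def)
  show "(\<Sum>\<beta>\<in>P. ((k1(\<alpha> := k1 \<alpha> - 1)) \<beta> - k2 \<beta>) + (k2 \<beta> - (k1(\<alpha> := k1 \<alpha> - 1)) \<beta>))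
         < (\<Sum>\<beta>\<in>P. (k1 \<beta> - k2 \<beta>) + (k2 \<beta> - k1 \<beta>))"
    using a(1,2) by (intro sum_strict_mono_ex1[OF finP]) auto
qed

lemma step_up:
  assumes R1: "lcn P k1 \<in> R" and a: "\<alpha> \<in> P" "k1 \<alpha> < k2 \<alpha>" "lcn P k1 \<bullet> \<alpha> < 0"
  shows "lcn P (k1(\<alpha> := k1 \<alpha> + 1)) \<in> R"
    and "(\<lambda>\<beta>. max ((k1(\<alpha> := k1 \<alpha> + 1)) \<beta>) (k2 \<beta>)) = (\<lambda>\<beta>. max (k1 \<beta>) (k2 \<beta>))"
    and "\<And>\<beta>. min (k1 \<beta>) (k2 \<beta>) \<le> min ((k1(\<alpha> := k1 \<alpha> + 1)) \<beta>) (k2 \<beta>)"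
    and "(\<Sum>\<beta>\<in>P. ((k1(\<alpha> := k1 \<alpha> + 1)) \<beta> - k2 \<beta>) + (k2 \<beta> - (k1(\<alpha> := k1 \<alpha> + 1)) \<beta>))
         < (\<Sum>\<beta>\<in>P. (k1 \<beta> - k2 \<beta>) + (k2 \<beta> - k1 \<beta>))"
proof -
  have sing: "lc P (\<lambda>\<beta>. if \<beta> = \<alpha> then 1 else 0) = \<alpha>" using lc_single a(1) by simp
  have "lcn P k1 \<noteq> - \<alpha>"
  proof
    assume "lcn P k1 = - \<alpha>"
    then have "lcn P k1 = - lc P (\<lambda>\<beta>. if \<beta> = \<alpha> then 1 else 0)" unfolding sing .
    then have "lcn P k1 = lc P (\<lambda>\<beta>. - (if \<beta> = \<alpha> then 1 else 0))" unfolding lc_uminus .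
    then have "real (k1 \<alpha>) = - 1" using lc_inj a(1) by fastforce
    then show False by simp
  qed
  then have "lcn P k1 + \<alpha> \<in> R" using F1'[of \<alpha> "lcn P k1"] PR a R1 by auto
  moreover have "lcn P k1 + lc P (\<lambda>\<beta>. if \<beta> = \<alpha> then 1 else 0) = lcn P (k1(\<alpha> := k1 \<alpha> + 1))"
    unfolding lc_add by (intro lc_cong) auto
  then have "lcn P k1 + \<alpha> = lcn P (k1(\<alpha> := k1 \<alpha> + 1))" unfolding sing .
  ultimately show "lcn P (k1(\<alpha> := k1 \<alpha> + 1)) \<in> R" by simp
  show "(\<lambda>\<beta>. max ((k1(\<alpha> := k1 \<alpha> + 1)) \<beta>) (k2 \<beta>)) = (\<lambda>\<beta>. max (k1 \<beta>) (k2 \<beta>))"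
    using a(2) by (auto simp: fun_eq_iff max_def)
  show "\<And>\<beta>. min (k1 \<beta>) (k2 \<beta>) \<le> min ((k1(\<alpha> := k1 \<alpha> + 1)) \<beta>) (k2 \<beta>)"
    by auto
  show "(\<Sum>\<beta>\<in>P. ((k1(\<alpha> := k1 \<alpha> + 1)) \<beta> - k2 \<beta>) + (k2 \<beta> - (k1(\<alpha> := k1 \<alpha> + 1)) \<beta>))
         < (\<Sum>\<beta>\<in>P. (k1 \<beta> - k2 \<beta>) + (k2 \<beta> - k1 \<beta>))"
    using a(1,2) by (intro sum_strict_mono_ex1[OF finP]) auto
qed

lemma dst_sym: "(\<Sum>\<beta>\<in>P. (k1 \<beta> - k2 \<beta>) + (k2 \<beta> - k1 \<beta>)) = (\<Sum>\<beta>\<in>P. (k2 \<beta> - k1 \<beta>) + (k1 \<beta> - k2 \<beta>))"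
  by (simp add: add.commute)

lemma min_root:
  "(\<Sum>\<beta>\<in>P. (k1 \<beta> - k2 \<beta>) + (k2 \<beta> - k1 \<beta>)) = n \<Longrightarrow> lcn P k1 \<in> R \<Longrightarrow> lcn P k2 \<in> R
   \<Longrightarrow> \<gamma>0 \<in> P \<Longrightarrow> 0 < min (k1 \<gamma>0) (k2 \<gamma>0) \<Longrightarrow> lcn P (\<lambda>\<beta>. min (k1 \<beta>) (k2 \<beta>)) \<in> R"
proof (induction n arbitrary: k1 k2 rule: less_induct)
  case (less n)
  show ?case
  proof (cases "\<forall>\<alpha>\<in>P. k1 \<alpha> \<le> k2 \<alpha>")
    case True
    then have "lcn P (\<lambda>\<beta>. min (k1 \<beta>) (k2 \<beta>)) = lcn P k1" by (intro lc_cong) auto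
    then show ?thesis using less by simp
  next
    case F1: False
    show ?thesis
    proof (cases "\<forall>\<alpha>\<in>P. k2 \<alpha> \<le> k1 \<alpha>")
      case True
      then have "lcn P (\<lambda>\<beta>. min (k1 \<beta>) (k2 \<beta>)) = lcn P k2" by (intro lc_cong) auto
      then show ?thesis using less by simp
    next
      case False
      then obtain \<alpha>0 \<beta>0 where ab: "\<alpha>0 \<in> P" "k2 \<alpha>0 < k1 \<alpha>0" "\<beta>0 \<in> P" "k1 \<beta>0 < k2 \<beta>0"
        using F1 by (auto simp: not_le)
      from down_step[OF less(3,4) ab] obtain \<alpha> where \<alpha>: "\<alpha> \<in> P"
        "(k2 \<alpha> < k1 \<alpha> \<and> lcn P k1 \<bullet> \<alpha> > 0) \<or> (k1 \<alpha> < k2 \<alpha> \<and> lcn P k2 \<bullet> \<alpha> > 0)" by blast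
      from \<alpha>(2) show ?thesis
      proof
        assume h: "k2 \<alpha> < k1 \<alpha> \<and> lcn P k1 \<bullet> \<alpha> > 0"
        note st = step_down[OF less(3) \<alpha>(1) conjunct1[OF h] conjunct2[OF h] less(5,6)]
        have c1: "0 < min ((k1(\<alpha> := k1 \<alpha> - 1)) \<gamma>0) (k2 \<gamma>0)"
          using fun_cong[OF st(2), of \<gamma>0] less(6) by simp
        have "lcn P (\<lambda>\<beta>. min ((k1(\<alpha> := k1 \<alpha> - 1)) \<beta>) (k2 \<beta>)) \<in> R"
          by (rule less(1)[OF st(3)[unfolded less(2)] refl st(1) less(4) less(5) c1])
        moreover have "lcn P (\<lambda>\<beta>. min ((k1(\<alpha> := k1 \<alpha> - 1)) \<beta>) (k2 \<beta>)) = lcn P (\<lambda>\<beta>. min (k1 \<beta>) (k2 \<beta>))"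
          by (intro lc_cong) (simp only: fun_cong[OF st(2)])
        ultimately show ?thesis by simp
      next
        assume h: "k1 \<alpha> < k2 \<alpha> \<and> lcn P k2 \<bullet> \<alpha> > 0"
        have c0: "0 < min (k2 \<gamma>0) (k1 \<gamma>0)" using less(6) by simp
        note st = step_down[OF less(4) \<alpha>(1) conjunct1[OF h] conjunct2[OF h] less(5) c0]
        have c1: "0 < min ((k2(\<alpha> := k2 \<alpha> - 1)) \<gamma>0) (k1 \<gamma>0)"
          using fun_cong[OF st(2), of \<gamma>0] c0 by simp
        have d: "(\<Sum>\<beta>\<in>P. (k2 \<beta> - k1 \<beta>) + (k1 \<beta> - k2 \<beta>)) = n"
          using less(2) dst_sym by metis
        have "lcn P (\<lambda>\<beta>. min ((k2(\<alpha> := k2 \<alpha> - 1)) \<beta>) (k1 \<beta>)) \<in> R"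
          by (rule less(1)[OF st(3)[unfolded d] refl st(1) less(3) less(5) c1])
        moreover have "lcn P (\<lambda>\<beta>. min ((k2(\<alpha> := k2 \<alpha> - 1)) \<beta>) (k1 \<beta>)) = lcn P (\<lambda>\<beta>. min (k2 \<beta>) (k1 \<beta>))"
          by (intro lc_cong) (simp only: fun_cong[OF st(2)])
        ultimately have "lcn P (\<lambda>\<beta>. min (k2 \<beta>) (k1 \<beta>)) \<in> R" by simp
        moreover have "lcn P (\<lambda>\<beta>. min (k2 \<beta>) (k1 \<beta>)) = lcn P (\<lambda>\<beta>. min (k1 \<beta>) (k2 \<beta>))"
          by (intro lc_cong) (simp add: min.commute)
        ultimately show ?thesis by simp
      qed
    qed
  qed
qed

lemma max_root:
  "(\<Sum>\<beta>\<in>P. (k1 \<beta> - k2 \<beta>) + (k2 \<beta> - k1 \<beta>)) = n \<Longrightarrow> lcn P k1 \<in> R \<Longrightarrow> lcn P k2 \<in> R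
   \<Longrightarrow> \<gamma>0 \<in> P \<Longrightarrow> 0 < min (k1 \<gamma>0) (k2 \<gamma>0) \<Longrightarrow> lcn P (\<lambda>\<beta>. max (k1 \<beta>) (k2 \<beta>)) \<in> R"
proof (induction n arbitrary: k1 k2 rule: less_induct)
  case (less n)
  show ?case
  proof (cases "\<forall>\<alpha>\<in>P. k1 \<alpha> \<le> k2 \<alpha>")
    case True
    then have "lcn P (\<lambda>\<beta>. max (k1 \<beta>) (k2 \<beta>)) = lcn P k2" by (intro lc_cong) auto
    then show ?thesis using less by simp
  next
    case F1: False
    show ?thesis
    proof (cases "\<forall>\<alpha>\<in>P. k2 \<alpha> \<le> k1 \<alpha>")
      case True
      then have "lcn P (\<lambda>\<beta>. max (k1 \<beta>) (k2 \<beta>)) = lcn P k1" by (intro lc_cong) auto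
      then show ?thesis using less by simp
    next
      case False
      then obtain \<alpha>0 \<beta>0 where ab: "\<alpha>0 \<in> P" "k2 \<alpha>0 < k1 \<alpha>0" "\<beta>0 \<in> P" "k1 \<beta>0 < k2 \<beta>0"
        using F1 by (auto simp: not_le)
      from up_step[OF less(3,4) ab less(5,6)] obtain \<alpha> where \<alpha>: "\<alpha> \<in> P"
        "(k1 \<alpha> < k2 \<alpha> \<and> lcn P k1 \<bullet> \<alpha> < 0) \<or> (k2 \<alpha> < k1 \<alpha> \<and> lcn P k2 \<bullet> \<alpha> < 0)" by blast
      from \<alpha>(2) show ?thesis
      proof
        assume h: "k1 \<alpha> < k2 \<alpha> \<and> lcn P k1 \<bullet> \<alpha> < 0"
        note st = step_up[of k1 \<alpha> k2, OF less(3) \<alpha>(1) conjunct1[OF h] conjunct2[OF h]]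
        have c1: "0 < min ((k1(\<alpha> := k1 \<alpha> + 1)) \<gamma>0) (k2 \<gamma>0)"
          using st(3)[of \<gamma>0] less(6) by linarith
        have "lcn P (\<lambda>\<beta>. max ((k1(\<alpha> := k1 \<alpha> + 1)) \<beta>) (k2 \<beta>)) \<in> R"
          by (rule less(1)[OF st(4)[unfolded less(2)] refl st(1) less(4) less(5) c1])
        moreover have "lcn P (\<lambda>\<beta>. max ((k1(\<alpha> := k1 \<alpha> + 1)) \<beta>) (k2 \<beta>)) = lcn P (\<lambda>\<beta>. max (k1 \<beta>) (k2 \<beta>))"
          by (intro lc_cong) (simp only: fun_cong[OF st(2)])
        ultimately show ?thesis by simp
      next
        assume h: "k2 \<alpha> < k1 \<alpha> \<and> lcn P k2 \<bullet> \<alpha> < 0"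
        have c0: "0 < min (k2 \<gamma>0) (k1 \<gamma>0)" using less(6) by simp
        note st = step_up[of k2 \<alpha> k1, OF less(4) \<alpha>(1) conjunct1[OF h] conjunct2[OF h]]
        have c1: "0 < min ((k2(\<alpha> := k2 \<alpha> + 1)) \<gamma>0) (k1 \<gamma>0)"
          using st(3)[of \<gamma>0] c0 by linarith
        have d: "(\<Sum>\<beta>\<in>P. (k2 \<beta> - k1 \<beta>) + (k1 \<beta> - k2 \<beta>)) = n"
          using less(2) dst_sym by metis
        have "lcn P (\<lambda>\<beta>. max ((k2(\<alpha> := k2 \<alpha> + 1)) \<beta>) (k1 \<beta>)) \<in> R"
          by (rule less(1)[OF st(4)[unfolded d] refl st(1) less(3) less(5) c1])
        moreover have "lcn P (\<lambda>\<beta>. max ((k2(\<alpha> := k2 \<alpha> + 1)) \<beta>) (k1 \<beta>)) = lcn P (\<lambda>\<beta>. max (k2 \<beta>) (k1 \<beta>))"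
          by (intro lc_cong) (simp only: fun_cong[OF st(2)])
        ultimately have "lcn P (\<lambda>\<beta>. max (k2 \<beta>) (k1 \<beta>)) \<in> R" by simp
        moreover have "lcn P (\<lambda>\<beta>. max (k2 \<beta>) (k1 \<beta>)) = lcn P (\<lambda>\<beta>. max (k1 \<beta>) (k2 \<beta>))"
          by (intro lc_cong) (simp add: max.commute)
        ultimately show ?thesis by simp
      qed
    qed
  qed
qed

lemma coeff_lcn: "\<alpha> \<in> P \<Longrightarrow> root_coeff P (lcn P k) \<alpha> = real (k \<alpha>)"
  unfolding root_coeff_def by (rule repr_lc)

lemma supp_lcn: "root_supp P (lcn P k) = {\<alpha>\<in>P. k \<alpha> \<noteq> 0}"
  unfolding root_supp_def using coeff_lcn by auto

lemma sum_min_lcn: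
  "(\<Sum>\<alpha>\<in>P. min (root_coeff P (lcn P k1) \<alpha>) (root_coeff P (lcn P k2) \<alpha>) *\<^sub>R \<alpha>)
   = lcn P (\<lambda>\<alpha>. min (k1 \<alpha>) (k2 \<alpha>))"
proof -
  have "(\<Sum>\<alpha>\<in>P. min (root_coeff P (lcn P k1) \<alpha>) (root_coeff P (lcn P k2) \<alpha>) *\<^sub>R \<alpha>)
     = lc P (\<lambda>\<alpha>. min (root_coeff P (lcn P k1) \<alpha>) (root_coeff P (lcn P k2) \<alpha>))"
    by (simp only: lc_def)
  also have "\<dots> = lcn P (\<lambda>\<alpha>. min (k1 \<alpha>) (k2 \<alpha>))"
    by (rule lc_cong) (simp add: coeff_lcn of_nat_min)
  finally show ?thesis .
qed

lemma pos_obtain: assumes "x \<in> pos_roots R P" obtains k where "x = lcn P k" "lcn P k \<in> R"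
  using assms pos_iff by auto

lemma meet_pos:
  assumes "lcn P k1 \<in> R" "lcn P k2 \<in> R" "\<gamma>0 \<in> P" "0 < min (k1 \<gamma>0) (k2 \<gamma>0)"
  shows "is_meet_in (root_le P) (pos_roots R P) (lcn P k1) (lcn P k2) (lcn P (\<lambda>\<alpha>. min (k1 \<alpha>) (k2 \<alpha>)))"
  unfolding is_meet_in_def
proof (intro conjI ballI impI)
  show "lcn P (\<lambda>\<alpha>. min (k1 \<alpha>) (k2 \<alpha>)) \<in> pos_roots R P"
    unfolding pos_iff using min_root[OF refl assms] by (blast intro: exI[of _ "\<lambda>\<alpha>. min (k1 \<alpha>) (k2 \<alpha>)"])
  show "root_le P (lcn P (\<lambda>\<alpha>. min (k1 \<alpha>) (k2 \<alpha>))) (lcn P k1)" unfolding le_iff by simp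
  show "root_le P (lcn P (\<lambda>\<alpha>. min (k1 \<alpha>) (k2 \<alpha>))) (lcn P k2)" unfolding le_iff by simp
  fix w assume "w \<in> pos_roots R P" "root_le P w (lcn P k1) \<and> root_le P w (lcn P k2)"
  then show "root_le P w (lcn P (\<lambda>\<alpha>. min (k1 \<alpha>) (k2 \<alpha>)))"
    by (elim pos_obtain) (auto simp: le_iff)
qed

lemma meetU:
  assumes g: "lcn P kg \<in> R" and x: "lcn P kx \<in> R" "\<forall>\<alpha>\<in>P. kg \<alpha> \<le> kx \<alpha>"
    and y: "lcn P ky \<in> R" "\<forall>\<alpha>\<in>P. kg \<alpha> \<le> ky \<alpha>"
  shows "is_meet_in (root_le P) {\<nu>\<in>pos_roots R P. root_le P (lcn P kg) \<nu>} (lcn P kx) (lcn P ky)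
           (lcn P (\<lambda>\<alpha>. min (kx \<alpha>) (ky \<alpha>)))"
  unfolding is_meet_in_def
proof (intro conjI ballI impI)
  obtain \<gamma>0 where "\<gamma>0 \<in> P" "kg \<gamma>0 > 0" using lcn_nonzero[OF g] by blast
  then have "0 < min (kx \<gamma>0) (ky \<gamma>0)" using x y by fastforce
  then show "lcn P (\<lambda>\<alpha>. min (kx \<alpha>) (ky \<alpha>)) \<in> {\<nu>\<in>pos_roots R P. root_le P (lcn P kg) \<nu>}"
    unfolding pos_iff using min_root[OF refl x(1) y(1) \<open>\<gamma>0 \<in> P\<close>] x y by (auto simp: le_iff)
  show "root_le P (lcn P (\<lambda>\<alpha>. min (kx \<alpha>) (ky \<alpha>))) (lcn P kx)" unfolding le_iff by simp
  show "root_le P (lcn P (\<lambda>\<alpha>. min (kx \<alpha>) (ky \<alpha>))) (lcn P ky)" unfolding le_iff by simp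
  fix w assume "w \<in> {\<nu>\<in>pos_roots R P. root_le P (lcn P kg) \<nu>}"
    "root_le P w (lcn P kx) \<and> root_le P w (lcn P ky)"
  then show "root_le P w (lcn P (\<lambda>\<alpha>. min (kx \<alpha>) (ky \<alpha>)))"
    by (auto elim!: pos_obtain simp: le_iff)
qed

lemma joinU:
  assumes g: "lcn P kg \<in> R" and x: "lcn P kx \<in> R" "\<forall>\<alpha>\<in>P. kg \<alpha> \<le> kx \<alpha>"
    and y: "lcn P ky \<in> R" "\<forall>\<alpha>\<in>P. kg \<alpha> \<le> ky \<alpha>"
  shows "is_join_in (root_le P) {\<nu>\<in>pos_roots R P. root_le P (lcn P kg) \<nu>} (lcn P kx) (lcn P ky)
           (lcn P (\<lambda>\<alpha>. max (kx \<alpha>) (ky \<alpha>)))"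
  unfolding is_join_in_def
proof (intro conjI ballI impI)
  obtain \<gamma>0 where "\<gamma>0 \<in> P" "kg \<gamma>0 > 0" using lcn_nonzero[OF g] by blast
  then have "0 < min (kx \<gamma>0) (ky \<gamma>0)" using x y by fastforce
  then show "lcn P (\<lambda>\<alpha>. max (kx \<alpha>) (ky \<alpha>)) \<in> {\<nu>\<in>pos_roots R P. root_le P (lcn P kg) \<nu>}"
    unfolding pos_iff using max_root[OF refl x(1) y(1) \<open>\<gamma>0 \<in> P\<close>] x y
    by (auto simp: le_iff max.coboundedI1)
  show "root_le P (lcn P kx) (lcn P (\<lambda>\<alpha>. max (kx \<alpha>) (ky \<alpha>)))" unfolding le_iff by simp
  show "root_le P (lcn P ky) (lcn P (\<lambda>\<alpha>. max (kx \<alpha>) (ky \<alpha>)))" unfolding le_iff by simp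
  fix w assume "w \<in> {\<nu>\<in>pos_roots R P. root_le P (lcn P kg) \<nu>}"
    "root_le P (lcn P kx) w \<and> root_le P (lcn P ky) w"
  then show "root_le P (lcn P (\<lambda>\<alpha>. max (kx \<alpha>) (ky \<alpha>))) w"
    by (auto elim!: pos_obtain simp: le_iff)
qed

lemma main1:
  assumes "\<gamma> \<in> pos_roots R P"
  shows "is_modular_lattice_on (root_le P) {\<nu>\<in>pos_roots R P. root_le P \<gamma> \<nu>}"
proof -
  obtain kg where g: "\<gamma> = lcn P kg" "lcn P kg \<in> R" using assms by (rule pos_obtain)
  let ?U = "{\<nu>\<in>pos_roots R P. root_le P (lcn P kg) \<nu>}"
  have U: "x \<in> ?U \<Longrightarrow> (\<And>k. x = lcn P k \<Longrightarrow> lcn P k \<in> R \<Longrightarrow> \<forall>\<alpha>\<in>P. kg \<alpha> \<le> k \<alpha> \<Longrightarrow> thesis) \<Longrightarrow> thesis"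
    for x thesis by (auto elim!: pos_obtain simp: le_iff)
  have anti: "\<forall>u\<in>?U. \<forall>v\<in>?U. root_le P u v \<longrightarrow> root_le P v u \<longrightarrow> u = v"
    using le_antisym by blast
  have lat: "is_lattice_on (root_le P) ?U"
    unfolding is_lattice_on_def
  proof (intro ballI conjI)
    fix x y assume "x \<in> ?U" "y \<in> ?U"
    then obtain kx ky where "x = lcn P kx" "lcn P kx \<in> R" "\<forall>\<alpha>\<in>P. kg \<alpha> \<le> kx \<alpha>"
      "y = lcn P ky" "lcn P ky \<in> R" "\<forall>\<alpha>\<in>P. kg \<alpha> \<le> ky \<alpha>" by (metis U)
    then show "\<exists>z. is_meet_in (root_le P) ?U x y z" "\<exists>z. is_join_in (root_le P) ?U x y z"
      using meetU[OF g(2)] joinU[OF g(2)] by blast+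
  qed
  have modl: "\<forall>a\<in>?U. \<forall>b\<in>?U. \<forall>c\<in>?U. root_le P a c \<longrightarrow>
        (\<forall>m l j r. is_meet_in (root_le P) ?U b c m \<and> is_join_in (root_le P) ?U a m l \<and>
                   is_join_in (root_le P) ?U a b j \<and> is_meet_in (root_le P) ?U j c r \<longrightarrow> l = r)"
  proof (intro ballI impI allI)
    fix a b c m l j r assume abc: "a \<in> ?U" "b \<in> ?U" "c \<in> ?U" and ac: "root_le P a c"
      and H: "is_meet_in (root_le P) ?U b c m \<and> is_join_in (root_le P) ?U a m l \<and>
                   is_join_in (root_le P) ?U a b j \<and> is_meet_in (root_le P) ?U j c r"
    obtain ka where a: "a = lcn P ka" "lcn P ka \<in> R" "\<forall>\<alpha>\<in>P. kg \<alpha> \<le> ka \<alpha>" using abc(1) by (rule U)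
    obtain kb where b: "b = lcn P kb" "lcn P kb \<in> R" "\<forall>\<alpha>\<in>P. kg \<alpha> \<le> kb \<alpha>" using abc(2) by (rule U)
    obtain kc where c: "c = lcn P kc" "lcn P kc \<in> R" "\<forall>\<alpha>\<in>P. kg \<alpha> \<le> kc \<alpha>" using abc(3) by (rule U)
    have akc: "\<forall>\<alpha>\<in>P. ka \<alpha> \<le> kc \<alpha>" using ac unfolding a c le_iff .
    have mbc: "\<forall>\<alpha>\<in>P. kg \<alpha> \<le> min (kb \<alpha>) (kc \<alpha>)" using b c by auto
    have jab: "\<forall>\<alpha>\<in>P. kg \<alpha> \<le> max (ka \<alpha>) (kb \<alpha>)" using a by (auto simp: le_max_iff_disj)
    have H1: "is_meet_in (root_le P) ?U (lcn P kb) (lcn P kc) m"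
      using H unfolding a(1) b(1) c(1) by blast
    have H2: "is_join_in (root_le P) ?U (lcn P ka) m l"
      using H unfolding a(1) b(1) c(1) by blast
    have H3: "is_join_in (root_le P) ?U (lcn P ka) (lcn P kb) j"
      using H unfolding a(1) b(1) c(1) by blast
    have H4: "is_meet_in (root_le P) ?U j (lcn P kc) r"
      using H unfolding a(1) b(1) c(1) by blast
    have m: "m = lcn P (\<lambda>\<alpha>. min (kb \<alpha>) (kc \<alpha>))"
      by (rule meet_unique[OF H1 meetU[OF g(2) b(2,3) c(2,3)] anti])
    have mR: "lcn P (\<lambda>\<alpha>. min (kb \<alpha>) (kc \<alpha>)) \<in> R"
      using meetU[OF g(2) b(2,3) c(2,3)] unfolding is_meet_in_def pos_roots_def by auto
    have j: "j = lcn P (\<lambda>\<alpha>. max (ka \<alpha>) (kb \<alpha>))"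
      by (rule join_unique[OF H3 joinU[OF g(2) a(2,3) b(2,3)] anti])
    have jR: "lcn P (\<lambda>\<alpha>. max (ka \<alpha>) (kb \<alpha>)) \<in> R"
      using joinU[OF g(2) a(2,3) b(2,3)] unfolding is_join_in_def pos_roots_def by auto
    have l: "l = lcn P (\<lambda>\<alpha>. max (ka \<alpha>) (min (kb \<alpha>) (kc \<alpha>)))"
      by (rule join_unique[OF H2[unfolded m] joinU[OF g(2) a(2,3) mR mbc] anti])
    have r: "r = lcn P (\<lambda>\<alpha>. min (max (ka \<alpha>) (kb \<alpha>)) (kc \<alpha>))"
      by (rule meet_unique[OF H4[unfolded j] meetU[OF g(2) jR jab c(2,3)] anti])
    show "l = r" unfolding l r using akc by (intro lc_cong) (auto simp: max_def min_def)
  qed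
  show ?thesis unfolding is_modular_lattice_on_def g(1) using lat modl by blast
qed

lemma main2:
  assumes "\<gamma>1 \<in> pos_roots R P" "\<gamma>2 \<in> pos_roots R P"
  shows "((\<exists>\<nu>. is_meet_in (root_le P) (pos_roots R P) \<gamma>1 \<gamma>2 \<nu>)
               \<longleftrightarrow> root_supp P \<gamma>1 \<inter> root_supp P \<gamma>2 \<noteq> {})
          \<and> (root_supp P \<gamma>1 \<inter> root_supp P \<gamma>2 \<noteq> {} \<longrightarrow>
               is_meet_in (root_le P) (pos_roots R P) \<gamma>1 \<gamma>2
                 (\<Sum>\<alpha>\<in>P. min (root_coeff P \<gamma>1 \<alpha>) (root_coeff P \<gamma>2 \<alpha>) *\<^sub>R \<alpha>))"
proof -
  obtain k1 where g1: "\<gamma>1 = lcn P k1" "lcn P k1 \<in> R" using assms(1) by (rule pos_obtain)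
  obtain k2 where g2: "\<gamma>2 = lcn P k2" "lcn P k2 \<in> R" using assms(2) by (rule pos_obtain)
  have supp: "root_supp P \<gamma>1 \<inter> root_supp P \<gamma>2 \<noteq> {} \<longleftrightarrow> (\<exists>\<gamma>0\<in>P. 0 < min (k1 \<gamma>0) (k2 \<gamma>0))"
    unfolding g1 g2 supp_lcn by auto
  have B: "root_supp P \<gamma>1 \<inter> root_supp P \<gamma>2 \<noteq> {} \<Longrightarrow>
      is_meet_in (root_le P) (pos_roots R P) \<gamma>1 \<gamma>2
                 (\<Sum>\<alpha>\<in>P. min (root_coeff P \<gamma>1 \<alpha>) (root_coeff P \<gamma>2 \<alpha>) *\<^sub>R \<alpha>)"
  proof -
    assume "root_supp P \<gamma>1 \<inter> root_supp P \<gamma>2 \<noteq> {}"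
    then obtain \<gamma>0 where "\<gamma>0 \<in> P" "0 < min (k1 \<gamma>0) (k2 \<gamma>0)" using supp by blast
    then show ?thesis unfolding g1(1) g2(1) sum_min_lcn using meet_pos[OF g1(2) g2(2)] by blast
  qed
  have A: "(\<exists>\<nu>. is_meet_in (root_le P) (pos_roots R P) \<gamma>1 \<gamma>2 \<nu>) \<Longrightarrow> root_supp P \<gamma>1 \<inter> root_supp P \<gamma>2 \<noteq> {}"
  proof -
    assume "\<exists>\<nu>. is_meet_in (root_le P) (pos_roots R P) \<gamma>1 \<gamma>2 \<nu>"
    then obtain \<nu> where "\<nu> \<in> pos_roots R P" "root_le P \<nu> \<gamma>1" "root_le P \<nu> \<gamma>2"
      unfolding is_meet_in_def by blast
    then obtain kn where n: "\<nu> = lcn P kn" "lcn P kn \<in> R" "root_le P (lcn P kn) (lcn P k1)" "root_le P (lcn P kn) (lcn P k2)"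
      unfolding g1 g2 by (metis pos_obtain)
    obtain \<gamma>0 where "\<gamma>0 \<in> P" "kn \<gamma>0 > 0" using lcn_nonzero[OF n(2)] by blast
    then have "0 < min (k1 \<gamma>0) (k2 \<gamma>0)" using n(3,4) unfolding le_iff by fastforce
    then show ?thesis unfolding supp using \<open>\<gamma>0 \<in> P\<close> by blast
  qed
  show ?thesis using A B by blast
qed

end

theorem theorem2p5:
  fixes R P :: "'a::euclidean_space set"
  assumes "root_system R" and "reduced_root_system R" and "irreducible_root_system R"
    and "is_base R P"
  shows "(\<forall>\<gamma>\<in>pos_roots R P.
            is_modular_lattice_on (root_le P) {\<nu>\<in>pos_roots R P. root_le P \<gamma> \<nu>})
       \<and> (\<forall>\<gamma>1\<in>pos_roots R P. \<forall>\<gamma>2\<in>pos_roots R P.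
            ((\<exists>\<nu>. is_meet_in (root_le P) (pos_roots R P) \<gamma>1 \<gamma>2 \<nu>)
               \<longleftrightarrow> root_supp P \<gamma>1 \<inter> root_supp P \<gamma>2 \<noteq> {})
          \<and> (root_supp P \<gamma>1 \<inter> root_supp P \<gamma>2 \<noteq> {} \<longrightarrow>
               is_meet_in (root_le P) (pos_roots R P) \<gamma>1 \<gamma>2
                 (\<Sum>\<alpha>\<in>P. min (root_coeff P \<gamma>1 \<alpha>) (root_coeff P \<gamma>2 \<alpha>) *\<^sub>R \<alpha>)))"
proof -
  interpret rsys R P by unfold_locales (use assms in auto)
  show ?thesis using main1 main2 by blast
qed

end
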